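(* Let $d\in\mathbb{N}$, $d\geq 2$, $L\geq 1$, $X\subseteq \mathbb{Z}^{d}$ and let $f\colon X\to \mathbb{R}^{d}$ be an $L$-bilipschitz mapping. Suppose that there exists $\lambda\geq 1$ such that $\mathbb{R}^{d}\subseteq \bigcup_{x\in X}\overline{B}(x,\lambda)$. Then there exists a bilipschitz extension $F\colon \mathbb{Z}^{d}\to\mathbb{R}^{d}$ of $f$ with \[\operatorname{Lip}(F)\leq 4\lambda L, \qquad \operatorname{Lip}(F^{-1})\leq 24\lambda^{2}L\sqrt{d}.\]
   Context: $\overline{B}(x,\lambda)$ is the closed Euclidean ball. $\operatorname{Lip}(g)=\sup_{x\neq y}\|g(y)-g(x)\|/\|y-x\|$. A mapping is $L$-bilipschitz if it is injective and both it and its inverse are $L$-Lipschitz. *)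

theory Defs
  imports "HOL-Analysis.Analysis"
begin

definition int_lattice :: "(real ^ 'n) set" where
  "int_lattice = {x. \<forall>i. x $ i \<in> \<int>}"

definition bilipschitz_on :: "real \<Rightarrow> 'a::metric_space set \<Rightarrow> ('a \<Rightarrow> 'b::metric_space) \<Rightarrow> bool" where
  "bilipschitz_on L X f \<longleftrightarrow> inj_on f X \<and> L-lipschitz_on X f \<and> L-lipschitz_on (f ` X) (inv_into X f)"

end

theory Submission
  imports Defs
begin

lemma lattice_dist:
  fixes z w :: "real ^ 'n"
  assumes "z \<in> int_lattice" "w \<in> int_lattice" "z \<noteq> w"
  shows "1 \<le> dist z w"
proof -
  obtain i where i: "z $ i \<noteq> w $ i" using assms(3) by (auto simp: vec_eq_iff)
  have "z $ i - w $ i \<in> \<int>" using assms(1,2) by (auto simp: int_lattice_def)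
  then have "1 \<le> \<bar>z $ i - w $ i\<bar>" using i by (intro Ints_nonzero_abs_ge1) auto
  also have "\<dots> = \<bar>(z - w) $ i\<bar>" by simp
  also have "\<dots> \<le> norm (z - w)" by (rule component_le_norm_cart)
  finally show ?thesis by (simp add: dist_norm)
qed

theorem lemma4p2:
  fixes X :: "(real ^ 'n) set" and f :: "real ^ 'n \<Rightarrow> real ^ 'n" and L lam :: real
  assumes "CARD('n) \<ge> 2"
    and "L \<ge> 1"
    and "X \<subseteq> int_lattice"
    and "bilipschitz_on L X f"
    and "lam \<ge> 1"
    and "UNIV \<subseteq> (\<Union>x\<in>X. cball x lam)"
  shows "\<exists>F :: real ^ 'n \<Rightarrow> real ^ 'n.
           (\<forall>x\<in>X. F x = f x) \<and> inj_on F int_lattice \<and>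
           (4 * lam * L)-lipschitz_on int_lattice F \<and>
           (24 * lam\<^sup>2 * L * sqrt (real CARD('n)))-lipschitz_on (F ` int_lattice) (inv_into int_lattice F)"
proof -
  have L0: "L > 0" "lam > 0" using assms(2,5) by auto
  have lamL: "1 \<le> lam * L" using mult_mono[of 1 lam 1 L] assms(2,5) by simp
  have inj: "inj_on f X" and flip: "\<And>x y. x \<in> X \<Longrightarrow> y \<in> X \<Longrightarrow> dist (f x) (f y) \<le> L * dist x y"
    using assms(4) by (auto simp: bilipschitz_on_def lipschitz_on_def)
  have finv: "dist x y \<le> L * dist (f x) (f y)" if "x \<in> X" "y \<in> X" for x y
  proof -
    have "dist (inv_into X f (f x)) (inv_into X f (f y)) \<le> L * dist (f x) (f y)"
      using assms(4) that by (auto simp: bilipschitz_on_def lipschitz_on_def)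
    then show ?thesis using inj that by (simp add: inv_into_f_f)
  qed
  define p where "p z = (if z \<in> X then z else (SOME x. x \<in> X \<and> dist z x \<le> lam))" for z
  have p: "p z \<in> X \<and> dist z (p z) \<le> lam" for z
  proof (cases "z \<in> X")
    case True then show ?thesis using L0 by (simp add: p_def)
  next
    case False
    have "z \<in> (\<Union>x\<in>X. cball x lam)" by (rule subsetD[OF assms(6) UNIV_I])
    then obtain x where "x \<in> X" "z \<in> cball x lam" by (rule UN_E)
    then have ex: "\<exists>x. x \<in> X \<and> dist z x \<le> lam" by (auto simp: dist_commute mem_cball)
    have "p z = (SOME x. x \<in> X \<and> dist z x \<le> lam)" using False by (simp add: p_def)
    then show ?thesis using someI_ex[OF ex] by simp
  qed
  have pX: "p x = x" if "x \<in> X" for x using that by (simp add: p_def)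
  define t where "t = 1 / (4 * lam * L)"
  have t0: "t > 0" "t \<le> 1" "t * lam = 1 / (4 * L)" using L0 assms(2,5) lamL by (auto simp: t_def field_simps)
  define F where "F z = f (p z) + t *\<^sub>R (z - p z)" for z
  have key: "dist (F z) (F w) \<le> 4 * lam * L * dist z w \<and> dist z w \<le> 6 * lam * L * dist (F z) (F w)"
    if z: "z \<in> int_lattice" and w: "w \<in> int_lattice" for z w
  proof (cases "p z = p w")
    case True
    have "F z - F w = t *\<^sub>R (z - w)" unfolding F_def True by (simp add: algebra_simps)
    then have d: "dist (F z) (F w) = t * dist z w" using t0 by (simp add: dist_norm)
    have "t * dist z w \<le> 1 * dist z w" using t0 by (intro mult_right_mono) auto
    also have "\<dots> \<le> 4 * lam * L * dist z w" using lamL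
      by (intro mult_right_mono) auto
    finally have 1: "dist (F z) (F w) \<le> 4 * lam * L * dist z w" using d by simp
    have "dist z w = (4 * lam * L) * dist (F z) (F w)" using d L0 by (simp add: t_def)
    also have "\<dots> \<le> (6 * lam * L) * dist (F z) (F w)" using L0 by (intro mult_right_mono) auto
    finally show ?thesis using 1 by simp
  next
    case False
    define x where "x = p z"
    define y where "y = p w"
    have xy: "x \<in> X" "y \<in> X" "x \<noteq> y" "dist z x \<le> lam" "dist w y \<le> lam"
      using p False by (auto simp: x_def y_def)
    have "z \<noteq> w" using False by auto
    then have zw1: "1 \<le> dist z w" using lattice_dist z w by blast
    have xy1: "1 \<le> dist x y" using lattice_dist xy(1-3) assms(3) by blast
    have e: "F z - F w = (f x - f y) + t *\<^sub>R ((z - x) - (w - y))"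
      unfolding F_def x_def y_def by (simp add: algebra_simps)
    have "norm (t *\<^sub>R ((z - x) - (w - y))) = t * norm ((z - x) - (w - y))" using t0 by simp
    also have "\<dots> \<le> t * (norm (z - x) + norm (w - y))" using t0 norm_triangle_ineq4
      by (intro mult_left_mono) auto
    also have "\<dots> \<le> t * (lam + lam)" using xy(4,5) t0 by (intro mult_left_mono) (auto simp: dist_norm)
    also have "\<dots> = 1 / (2 * L)" using t0 by (simp add: algebra_simps)
    finally have pert: "norm (t *\<^sub>R ((z - x) - (w - y))) \<le> 1 / (2 * L)" .
    have fu: "norm (f x - f y) \<le> L * dist x y" using flip xy by (simp add: dist_norm)
    have fl: "dist x y \<le> L * norm (f x - f y)" using finv xy by (simp add: dist_norm)
    have dxy: "dist x y \<le> dist z w + 2 * lam"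
    proof -
      have "dist x y \<le> dist x z + dist z y" by (rule dist_triangle)
      moreover have "dist z y \<le> dist z w + dist w y" by (rule dist_triangle)
      moreover have "dist x z = dist z x" by (rule dist_commute)
      ultimately show ?thesis using xy(4,5) by linarith
    qed
    have dzw: "dist z w \<le> dist x y + 2 * lam"
    proof -
      have "dist z w \<le> dist z x + dist x w" by (rule dist_triangle)
      moreover have "dist x w \<le> dist x y + dist y w" by (rule dist_triangle)
      moreover have "dist y w = dist w y" by (rule dist_commute)
      ultimately show ?thesis using xy(4,5) by linarith
    qed
    have up: "dist (F z) (F w) \<le> L * dist x y + 1 / (2 * L)"
      using e fu pert norm_triangle_ineq[of "f x - f y" "t *\<^sub>R ((z - x) - (w - y))"]
      by (simp add: dist_norm)
    have lo: "norm (f x - f y) - 1 / (2 * L) \<le> dist (F z) (F w)"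
      using e pert norm_diff_ineq[of "f x - f y" "t *\<^sub>R ((z - x) - (w - y))"]
      by (simp add: dist_norm)
    have 1: "dist (F z) (F w) \<le> 4 * lam * L * dist z w"
    proof -
      have "L * dist x y \<le> L * (dist z w + 2 * lam)"
        using dxy L0 by (intro mult_left_mono) auto
      also have "\<dots> = L * dist z w + 2 * lam * L * 1" by (simp add: algebra_simps)
      also have "\<dots> \<le> L * dist z w + 2 * lam * L * dist z w"
        using zw1 L0 by (intro add_left_mono mult_left_mono) auto
      finally have "L * dist x y \<le> L * dist z w + 2 * lam * L * dist z w" .
      moreover have "1 / (2 * L) \<le> 1/2 * dist z w"
      proof -
        have "1 / (2 * L) \<le> 1 / 2" using assms(2) by (simp add: field_simps)
        also have "\<dots> \<le> 1/2 * dist z w" using zw1 by simp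
        finally show ?thesis .
      qed
      moreover have "L * dist z w \<le> lam * L * dist z w" using L0 assms(5) zw1
        by (simp add: mult_right_mono)
      moreover have "1/2 * dist z w \<le> lam * L * dist z w" using lamL zw1
        by (intro mult_right_mono) auto
      ultimately show ?thesis using up by linarith
    qed
    have 2: "dist z w \<le> 6 * lam * L * dist (F z) (F w)"
    proof -
      have a: "dist x y \<le> 2 * L * dist (F z) (F w)"
      proof -
        have "dist x y / L \<le> norm (f x - f y)" using fl L0 by (simp add: field_simps)
        then have "dist x y / L - 1 / (2 * L) \<le> dist (F z) (F w)" using lo by linarith
        moreover have "dist x y / (2 * L) \<le> dist x y / L - 1 / (2 * L)"
          using xy1 L0 by (simp add: field_simps)
        ultimately have "dist x y / (2 * L) \<le> dist (F z) (F w)" by linarith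
        then show ?thesis using L0 by (simp add: field_simps)
      qed
      have "2 * lam * 1 \<le> 2 * lam * dist x y" using xy1 L0 by (intro mult_left_mono) auto
      moreover have "1 * dist x y \<le> lam * dist x y" using assms(5) by (intro mult_right_mono) auto
      ultimately have "dist z w \<le> 3 * lam * dist x y" using dzw by (simp add: algebra_simps)
      also have "\<dots> \<le> 3 * lam * (2 * L * dist (F z) (F w))" using a L0 by (intro mult_left_mono) auto
      finally show ?thesis by (simp add: algebra_simps)
    qed
    show ?thesis using 1 2 by simp
  qed
  have injF: "inj_on F int_lattice"
  proof (rule inj_onI)
    fix z w assume "z \<in> int_lattice" "w \<in> int_lattice" "F z = F w"
    then show "z = w" using key[of z w] by simp
  qed
  have C: "6 * lam * L \<le> 24 * lam\<^sup>2 * L * sqrt (real CARD('n))"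
  proof -
    have s: "1 \<le> sqrt (real CARD('n))" using assms(1) by simp
    have "6 * lam * L \<le> 24 * lam\<^sup>2 * L" using L0 assms(5)
      using mult_left_mono[of 1 lam "24 * lam * L"] by (simp add: power2_eq_square algebra_simps)
    also have "\<dots> \<le> 24 * lam\<^sup>2 * L * sqrt (real CARD('n))" using s L0
      using mult_left_mono[OF s, of "24 * lam\<^sup>2 * L"] by simp
    finally show ?thesis .
  qed
  show ?thesis
  proof (intro exI conjI ballI)
    show "F x = f x" if "x \<in> X" for x using that pX by (simp add: F_def)
    show "inj_on F int_lattice" by (rule injF)
    show "(4 * lam * L)-lipschitz_on int_lattice F"
      using key L0 by (auto simp: lipschitz_on_def)
    show "(24 * lam\<^sup>2 * L * sqrt (real CARD('n)))-lipschitz_on (F ` int_lattice) (inv_into int_lattice F)"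
    proof (rule lipschitz_onI)
      fix a b assume "a \<in> F ` int_lattice" "b \<in> F ` int_lattice"
      then obtain z w where zw: "z \<in> int_lattice" "w \<in> int_lattice" "a = F z" "b = F w" by auto
      have "dist z w \<le> 6 * lam * L * dist (F z) (F w)" using key zw by blast
      also have "\<dots> \<le> 24 * lam\<^sup>2 * L * sqrt (real CARD('n)) * dist (F z) (F w)"
        using C by (intro mult_right_mono) auto
      finally show "dist (inv_into int_lattice F a) (inv_into int_lattice F b)
          \<le> 24 * lam\<^sup>2 * L * sqrt (real CARD('n)) * dist a b"
        using zw injF by (simp add: inv_into_f_f)
    next
      show "0 \<le> 24 * lam\<^sup>2 * L * sqrt (real CARD('n))" using L0 by simp
    qed
  qed
qed

end
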